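(* We have $[A,x]=[A,A]=x^NA$, where $[A,x]=\{ax-xa:a\in A\}$ and $[A,A]$ is the span of all commutators.
   Context: Let $\Bbbk$ be a field of characteristic zero and $N\geq1$ an integer. Let $A=A_N$ be the $\Bbbk$-algebra generated by $x,y$ subject to the relation $yx-xy=x^N$. *)

theory Defs
  imports "HOL-Library.Poly_Mapping"
begin

text \<open>The free associative algebra k<x,y> is realised as finitely supported functions
  from words to k, with convolution product.\<close>

datatype word = Word "bool list"

instantiation word :: monoid_add
begin
fun plus_word :: "word \<Rightarrow> word \<Rightarrow> word" where
  "plus_word (Word u) (Word v) = Word (u @ v)"
definition zero_word :: word where "zero_word = Word []"
instance
proof
  fix a b c :: word
  show "a + b + c = a + (b + c)" by (cases a; cases b; cases c) simp
  show "0 + a = a" by (cases a) (simp add: zero_word_def)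
  show "a + 0 = a" by (cases a) (simp add: zero_word_def)
qed
end

type_synonym 'k freealg = "word \<Rightarrow>\<^sub>0 'k"

definition genx :: "'k::field freealg" where
  "genx = Poly_Mapping.single (Word [False]) 1"

definition geny :: "'k::field freealg" where
  "geny = Poly_Mapping.single (Word [True]) 1"

definition scal :: "'k::field \<Rightarrow> 'k freealg" where
  "scal c = Poly_Mapping.single 0 c"

definition relA :: "nat \<Rightarrow> 'k::field freealg" where
  "relA N = geny * genx - genx * geny - genx ^ N"

inductive_set tsideal :: "'k::field freealg \<Rightarrow> 'k freealg set" for r where
  zero: "0 \<in> tsideal r"
| gen: "a * r * b \<in> tsideal r"
| add: "p \<in> tsideal r \<Longrightarrow> q \<in> tsideal r \<Longrightarrow> p + q \<in> tsideal r"

inductive_set comm_span :: "'k::field freealg set" where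
  zero: "0 \<in> comm_span"
| gen: "scal c * (a * b - b * a) \<in> comm_span"
| add: "p \<in> comm_span \<Longrightarrow> q \<in> comm_span \<Longrightarrow> p + q \<in> comm_span"

text \<open>Image in A_N = k<x,y>/(yx-xy-x^N) of a subset S of the free algebra,
  represented as the full preimage S + I.\<close>
definition inA :: "nat \<Rightarrow> 'k::field freealg set \<Rightarrow> 'k freealg set" where
  "inA N S = {f. \<exists>s\<in>S. f - s \<in> tsideal (relA N)}"

end

theory Submission
  imports Defs
begin

lemma update_eq_add_single:
  assumes "a \<notin> Poly_Mapping.keys f"
  shows "Poly_Mapping.update a b f = f + Poly_Mapping.single a b"
proof -
  have "Poly_Mapping.lookup f a = 0" using assms by (simp add: Poly_Mapping.in_keys_iff)
  then show ?thesis
    by (intro poly_mapping_eqI) (auto simp: lookup_update lookup_add lookup_single when_def)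
qed

lemma scal_commute: "scal c * (f::'k::field freealg) = f * scal c"
proof (induction f rule: update_induct)
  case const then show ?case by simp
next
  case (update f a b)
  then show ?case
    by (simp add: update_eq_add_single scal_def distrib_left distrib_right mult_single mult.commute)
qed

lemma scal_mult: "scal c * scal d = (scal (c*d) :: 'k::field freealg)"
  by (simp add: scal_def mult_single)

lemma scal_one: "scal 1 = (1::'k::field freealg)"
  by (simp add: scal_def)

lemma scal_of_nat: "scal (of_nat n) = (of_nat n::'k::field freealg)"
  by (simp add: scal_def)

lemma single_cons:
  "Poly_Mapping.single (Word (b#w)) c = Poly_Mapping.single (Word [b]) 1 * (Poly_Mapping.single (Word w) c :: 'k::field freealg)"
  by (simp add: mult_single)

lemma left_induct:
  fixes P :: "'k::field freealg \<Rightarrow> bool"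
  assumes sc: "\<And>c. P (scal c)"
    and lx: "\<And>f. P f \<Longrightarrow> P (genx * f)"
    and ly: "\<And>f. P f \<Longrightarrow> P (geny * f)"
    and ad: "\<And>f g. P f \<Longrightarrow> P g \<Longrightarrow> P (f + g)"
  shows "P f"
proof -
  have mono: "P (Poly_Mapping.single (Word w) c)" for w c
  proof (induction w arbitrary: c)
    case Nil
    then show ?case using sc[of c] by (simp add: scal_def zero_word_def)
  next
    case (Cons b w)
    show ?case
    proof (cases b)
      case True
      then show ?thesis using ly[OF Cons.IH[of c]] single_cons[of b w c] by (simp add: geny_def)
    next
      case False
      then show ?thesis using lx[OF Cons.IH[of c]] single_cons[of b w c] by (simp add: genx_def)
    qed
  qed
  have mono': "P (Poly_Mapping.single u c)" for u c
    using mono by (cases u) auto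
  show ?thesis
  proof (induction f rule: update_induct)
    case const then show ?case using sc[of 0] by (simp add: scal_def)
  next
    case (update f a b)
    then show ?case using ad mono' by (simp add: update_eq_add_single)
  qed
qed

abbreviation II :: "nat \<Rightarrow> 'k::field freealg set" where "II N \<equiv> tsideal (relA N)"

lemma I_uminus: "p \<in> tsideal r \<Longrightarrow> - p \<in> tsideal r"
proof (induction rule: tsideal.induct)
  case zero then show ?case by (simp add: tsideal.zero)
next
  case (gen a b)
  have "- (a * r * b) = (-a) * r * b" by simp
  then show ?case by (metis tsideal.gen)
next
  case (add p q) then show ?case using tsideal.add[of "-p" r "-q"] by (simp add: add.commute)
qed

lemma I_diff: "p \<in> tsideal r \<Longrightarrow> q \<in> tsideal r \<Longrightarrow> p - q \<in> tsideal r"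
  using tsideal.add[of p r "-q"] I_uminus[of q r] by simp

lemma I_lmult: "p \<in> tsideal r \<Longrightarrow> c * p \<in> tsideal r"
proof (induction rule: tsideal.induct)
  case zero then show ?case by (simp add: tsideal.zero)
next
  case (gen a b)
  have "c * (a * r * b) = (c*a) * r * b" by (simp add: mult.assoc)
  then show ?case by (metis tsideal.gen)
next
  case (add p q) then show ?case using tsideal.add by (metis distrib_left)
qed

lemma I_rmult: "p \<in> tsideal r \<Longrightarrow> p * c \<in> tsideal r"
proof (induction rule: tsideal.induct)
  case zero then show ?case by (simp add: tsideal.zero)
next
  case (gen a b)
  have "(a * r * b) * c = a * r * (b * c)" by (simp add: mult.assoc)
  then show ?case by (metis tsideal.gen)
next
  case (add p q) then show ?case using tsideal.add by (metis distrib_right)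
qed

lemma I_r: "r \<in> tsideal r"
  using tsideal.gen[of 1 r 1] by simp

lemma I_of_nat: "p \<in> tsideal r \<Longrightarrow> of_nat n * p \<in> tsideal r"
  by (rule I_lmult)

lemma ring_ident1:
  fixes X Y P Q R Z :: "'a::ring_1"
  assumes "Q * X = R" "P * Z = R"
  shows "Y * (P * X) - (P * X) * Y - (1 + of_nat m) * R
       = (Y * P - P * Y - of_nat m * Q) * X + P * (Y * X - X * Y - Z)"
proof -
  have "(Y * P - P * Y - of_nat m * Q) * X + P * (Y * X - X * Y - Z)
     = Y * (P * X) - P * (Y * X) - of_nat m * (Q * X) + P * (Y * X) - P * X * Y - P * Z"
    by (simp add: algebra_simps)
  also have "\<dots> = Y * (P * X) - (P * X) * Y - (1 + of_nat m) * R"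
    using assms by (simp add: algebra_simps)
  finally show ?thesis by simp
qed

lemma YX_pow:
  assumes "N \<ge> 1"
  shows "geny * genx^m - genx^m * geny - of_nat m * genx^(m+N-1) \<in> II N"
proof (induction m)
  case 0 then show ?case by (simp add: tsideal.zero)
next
  case (Suc m)
  let ?X = "genx :: 'a freealg" and ?Y = "geny :: 'a freealg"
  have p1: "?X^(m+N-1) * ?X = ?X^(m+N)" using assms
    by (metis Nat.add_diff_assoc add_diff_cancel_left' le_add2 plus_1_eq_Suc power_Suc2 add_Suc_right)
  have p2: "?X^(Suc m + N - 1) = ?X^(m+N)" by simp
  have p3: "?X^m * ?X^N = ?X^(m+N)" by (simp add: power_add)
  have "?Y * ?X^(Suc m) - ?X^(Suc m) * ?Y - of_nat (Suc m) * ?X^(Suc m+N-1)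
      = (?Y * ?X^m - ?X^m * ?Y - of_nat m * ?X^(m+N-1)) * ?X + ?X^m * relA N"
    unfolding relA_def p2 power_Suc2 of_nat_Suc
    by (rule ring_ident1[OF p1 p3])
  then show ?case using Suc tsideal.add I_rmult I_lmult I_r by metis
qed

abbreviation JJ :: "nat \<Rightarrow> 'k::field freealg set" where
  "JJ N \<equiv> inA N {genx ^ N * a | a. True}"

lemma J_intro: "f - genx ^ N * a \<in> II N \<Longrightarrow> f \<in> JJ N"
  unfolding inA_def by blast

lemma J_elim: "f \<in> JJ N \<Longrightarrow> \<exists>a. f - genx ^ N * a \<in> II N"
  unfolding inA_def by blast

lemma J_gen: "genx ^ N * a \<in> JJ N"
  by (rule J_intro[of _ _ a]) (simp add: tsideal.zero)

lemma J_I: "p \<in> II N \<Longrightarrow> p \<in> JJ N"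
  by (rule J_intro[of _ _ 0]) simp

lemma J_add: "f \<in> JJ N \<Longrightarrow> g \<in> JJ N \<Longrightarrow> f + g \<in> JJ N"
proof -
  assume "f \<in> JJ N" "g \<in> JJ N"
  then obtain a b where "f - genx^N * a \<in> II N" "g - genx^N * b \<in> II N" using J_elim by metis
  then have "(f - genx^N * a) + (g - genx^N * b) \<in> II N" by (rule tsideal.add)
  then have "(f + g) - genx^N * (a + b) \<in> II N" by (simp add: algebra_simps)
  then show ?thesis by (rule J_intro)
qed

lemma J_uminus: "f \<in> JJ N \<Longrightarrow> - f \<in> JJ N"
proof -
  assume "f \<in> JJ N"
  then obtain a where "f - genx^N * a \<in> II N" using J_elim by metis
  then have "- (f - genx^N * a) \<in> II N" by (rule I_uminus)
  then have "(- f) - genx^N * (- a) \<in> II N" by (simp add: algebra_simps)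
  then show ?thesis by (rule J_intro)
qed

lemma J_diff: "f \<in> JJ N \<Longrightarrow> g \<in> JJ N \<Longrightarrow> f - g \<in> JJ N"
  using J_add[of f N "-g"] J_uminus[of g N] by simp

lemma J_rmult: "f \<in> JJ N \<Longrightarrow> f * c \<in> JJ N"
proof -
  assume "f \<in> JJ N"
  then obtain a where "f - genx^N * a \<in> II N" using J_elim by metis
  then have "(f - genx^N * a) * c \<in> II N" by (rule I_rmult)
  then have "f * c - genx^N * (a * c) \<in> II N" by (simp add: algebra_simps)
  then show ?thesis by (rule J_intro)
qed

lemma J_lX: "f \<in> JJ N \<Longrightarrow> genx * f \<in> JJ N"
proof -
  assume "f \<in> JJ N"
  then obtain a where "f - genx^N * a \<in> II N" using J_elim by metis
  then have "genx * (f - genx^N * a) \<in> II N" by (rule I_lmult)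
  then have "genx * f - genx^N * (genx * a) \<in> II N"
    by (simp only: right_diff_distrib mult.assoc[symmetric] power_commutes)
  then show ?thesis by (rule J_intro)
qed

lemma J_lscal: "f \<in> JJ N \<Longrightarrow> scal c * f \<in> JJ N"
proof -
  assume "f \<in> JJ N"
  then obtain a where "f - genx^N * a \<in> II N" using J_elim by metis
  then have "scal c * (f - genx^N * a) \<in> II N" by (rule I_lmult)
  moreover have "scal c * (f - genx^N * a) = scal c * f - genx^N * (scal c * a)"
    by (simp only: right_diff_distrib mult.assoc[symmetric] scal_commute[of c "genx^N"])
  ultimately show ?thesis by (metis J_intro)
qed

lemma J_lY:
  assumes N: "N \<ge> 1"
  shows "f \<in> JJ N \<Longrightarrow> geny * f \<in> JJ N"
proof -
  assume "f \<in> JJ N"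
  then obtain a where a: "f - genx^N * a \<in> II N" using J_elim by metis
  let ?E = "geny * genx^N - genx^N * geny - of_nat N * genx^(N+N-1)"
  have E: "?E \<in> II N" using YX_pow[OF N] .
  have pw: "genx^(N+N-1) = genx^N * genx^(N-1)" using N by (simp add: power_add[symmetric])
  have "geny * (f - genx^N * a) + ?E * a \<in> II N"
    using tsideal.add[OF I_lmult[OF a] I_rmult[OF E]] .
  moreover have "geny * (f - genx^N * a) + ?E * a
      = geny * f - genx^N * (geny * a + of_nat N * genx^(N-1) * a)"
  proof -
    have q: "genx^N * (of_nat N * (genx^(N-1) * a)) = of_nat N * (genx^(N+N-1) * a)"
    proof -
      have "genx^N * (of_nat N * (genx^(N-1) * a)) = (genx^N * of_nat N) * (genx^(N-1) * a)"
        by (simp only: mult.assoc)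
      also have "\<dots> = (of_nat N * genx^N) * (genx^(N-1) * a)"
        by (simp only: mult_of_nat_commute)
      also have "\<dots> = of_nat N * ((genx^N * genx^(N-1)) * a)"
        by (simp only: mult.assoc)
      also have "\<dots> = of_nat N * (genx^(N+N-1) * a)"
        by (simp only: pw)
      finally show ?thesis .
    qed
    show ?thesis using q by (simp add: algebra_simps)
  qed
  ultimately show ?thesis by (metis J_intro)
qed

lemma J_lmult:
  fixes c f :: "'k::field freealg"
  assumes N: "N \<ge> 1"
  shows "f \<in> JJ N \<Longrightarrow> c * f \<in> JJ N"
proof -
  have "\<forall>f \<in> JJ N. c * f \<in> JJ N"
  proof (induction c rule: left_induct)
    case (1 c) then show ?case using J_lscal by blast
  next
    case (2 g) show ?case
    proof
      fix f :: "'k freealg" assume "f \<in> JJ N"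
      then have "g * f \<in> JJ N" using 2 by blast
      then have "genx * (g * f) \<in> JJ N" by (rule J_lX)
      then show "genx * g * f \<in> JJ N" by (simp add: mult.assoc)
    qed
  next
    case (3 g) show ?case
    proof
      fix f :: "'k freealg" assume "f \<in> JJ N"
      then have "g * f \<in> JJ N" using 3 by blast
      then have "geny * (g * f) \<in> JJ N" by (rule J_lY[OF N])
      then show "geny * g * f \<in> JJ N" by (simp add: mult.assoc)
    qed
  next
    case (4 g h) show ?case
    proof
      fix f :: "'k freealg" assume "f \<in> JJ N"
      then have "g * f \<in> JJ N" "h * f \<in> JJ N" using 4 by blast+
      then have "g * f + h * f \<in> JJ N" by (rule J_add)
      then show "(g + h) * f \<in> JJ N" by (simp add: distrib_right)
    qed
  qed
  then show "f \<in> JJ N \<Longrightarrow> c * f \<in> JJ N" by blast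
qed

lemma comm_X:
  fixes b :: "'k::field freealg"
  assumes N: "N \<ge> 1"
  shows "genx * b - b * genx \<in> JJ N"
proof (induction b rule: left_induct)
  case (1 c)
  have "genx * scal c - scal c * genx = (0::'k freealg)" by (simp add: scal_commute)
  then show ?case using J_I[OF tsideal.zero, of N] by simp
next
  case (2 f)
  have "genx * (genx * f) - genx * f * genx = genx * (genx * f - f * genx)"
    by (simp add: algebra_simps)
  then show ?case using J_lmult[OF N 2] by simp
next
  case (3 f)
  have e: "genx * (geny * f) - geny * f * genx
      = (- (genx^N * f) + - (relA N * f)) + geny * (genx * f - f * genx)"
    unfolding relA_def by (simp add: algebra_simps)
  have "- (genx^N * f) \<in> JJ N" using J_uminus[OF J_gen] .
  moreover have "- (relA N * f) \<in> JJ N" by (rule J_uminus[OF J_I[OF I_rmult[OF I_r]]])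
  moreover have "geny * (genx * f - f * genx) \<in> JJ N" using J_lmult[OF N 3] .
  ultimately show ?case unfolding e by (intro J_add)
next
  case (4 f g)
  have "genx * (f + g) - (f + g) * genx = (genx * f - f * genx) + (genx * g - g * genx)"
    by (simp add: algebra_simps)
  then show ?case using J_add[OF 4] by simp
qed

lemma comm_Y:
  fixes b :: "'k::field freealg"
  assumes N: "N \<ge> 1"
  shows "geny * b - b * geny \<in> JJ N"
proof (induction b rule: left_induct)
  case (1 c)
  have "geny * scal c - scal c * geny = (0::'k freealg)" by (simp add: scal_commute)
  then show ?case using J_I[OF tsideal.zero, of N] by simp
next
  case (2 f)
  have e: "geny * (genx * f) - genx * f * geny
      = (genx^N * f + relA N * f) + genx * (geny * f - f * geny)"
    unfolding relA_def by (simp add: algebra_simps)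
  have "genx^N * f \<in> JJ N" by (rule J_gen)
  moreover have "relA N * f \<in> JJ N" by (rule J_I[OF I_rmult[OF I_r]])
  moreover have "genx * (geny * f - f * geny) \<in> JJ N" using J_lmult[OF N 2] .
  ultimately show ?case unfolding e by (intro J_add)
next
  case (3 f)
  have "geny * (geny * f) - geny * f * geny = geny * (geny * f - f * geny)"
    by (simp add: algebra_simps)
  then show ?case using J_lmult[OF N 3] by simp
next
  case (4 f g)
  have "geny * (f + g) - (f + g) * geny = (geny * f - f * geny) + (geny * g - g * geny)"
    by (simp add: algebra_simps)
  then show ?case using J_add[OF 4] by simp
qed

lemma comm_all:
  fixes a b :: "'k::field freealg"
  assumes N: "N \<ge> 1"
  shows "a * b - b * a \<in> JJ N"
proof (induction a rule: left_induct)
  case (1 c)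
  have "scal c * b - b * scal c = (0::'k freealg)" by (simp add: scal_commute)
  then show ?case using J_I[OF tsideal.zero, of N] by simp
next
  case (2 f)
  have e: "genx * f * b - b * (genx * f) = genx * (f * b - b * f) + (genx * b - b * genx) * f"
    by (simp add: algebra_simps)
  show ?case unfolding e using J_add[OF J_lmult[OF N 2] J_rmult[OF comm_X[OF N]]] .
next
  case (3 f)
  have e: "geny * f * b - b * (geny * f) = geny * (f * b - b * f) + (geny * b - b * geny) * f"
    by (simp add: algebra_simps)
  show ?case unfolding e using J_add[OF J_lmult[OF N 3] J_rmult[OF comm_Y[OF N]]] .
next
  case (4 f g)
  have "(f + g) * b - b * (f + g) = (f * b - b * f) + (g * b - b * g)"
    by (simp add: algebra_simps)
  then show ?case using J_add[OF 4] by simp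
qed

lemma comm_span_J:
  assumes N: "N \<ge> 1"
  shows "p \<in> comm_span \<Longrightarrow> p \<in> JJ N"
proof (induction rule: comm_span.induct)
  case zero then show ?case using J_I[OF tsideal.zero] by simp
next
  case (gen c a b) then show ?case using J_lmult[OF N comm_all[OF N]] by blast
next
  case (add p q) then show ?case using J_add by blast
qed

lemma ring_ident2:
  fixes Y s s' P Q T T' :: "'a::ring_1"
  assumes "Y * s = s * Y" "s * of_nat m = s'" "T' = Y * T"
  shows "Y * (s * P * T) - (s * P * T' + s' * Q * T) = s * (Y * P - P * Y - of_nat m * Q) * T"
proof -
  have "s * (Y * P - P * Y - of_nat m * Q) * T = (s * Y) * P * T - s * P * (Y * T) - (s * of_nat m) * Q * T"
    by (simp add: algebra_simps)
  also have "\<dots> = (Y * s) * P * T - s * P * T' - s' * Q * T"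
    by (simp only: assms(1)[symmetric] assms(2) assms(3)[symmetric])
  also have "\<dots> = Y * (s * P * T) - (s * P * T' + s' * Q * T)"
    by (simp only: mult.assoc diff_diff_eq)
  finally show ?thesis by (rule sym)
qed

lemma Ymon:
  assumes N: "N \<ge> 1"
  shows "geny * (scal c * genx^m * geny^t) - (scal c * genx^m * geny^(Suc t)
           + scal (c * of_nat m) * genx^(m+N-1) * geny^t) \<in> II N"
proof -
  have "geny * (scal c * genx^m * geny^t) - (scal c * genx^m * geny^(Suc t)
           + scal (c * of_nat m) * genx^(m+N-1) * geny^t)
      = scal c * (geny * genx^m - genx^m * geny - of_nat m * genx^(m+N-1)) * (geny^t :: 'a freealg)"
    by (rule ring_ident2) (rule scal_commute[symmetric], simp only: scal_of_nat[symmetric] scal_mult, rule power_Suc)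
  then show ?thesis using I_rmult[OF I_lmult[OF YX_pow[OF N]]] by metis
qed

abbreviation KK :: "nat \<Rightarrow> 'k::field freealg set" where
  "KK N \<equiv> inA N {a * genx - genx * a | a. True}"

lemma K_intro: "f - (a * genx - genx * a) \<in> II N \<Longrightarrow> f \<in> KK N"
  unfolding inA_def by blast

lemma K_elim: "f \<in> KK N \<Longrightarrow> \<exists>a. f - (a * genx - genx * a) \<in> II N"
  unfolding inA_def by blast

lemma K_gen: "a * genx - genx * a \<in> KK N"
  by (rule K_intro[of _ a]) (simp add: tsideal.zero)

lemma K_I: "p \<in> II N \<Longrightarrow> p \<in> KK N"
  by (rule K_intro[of _ 0]) simp

lemma K_add: "f \<in> KK N \<Longrightarrow> g \<in> KK N \<Longrightarrow> f + g \<in> KK N"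
proof -
  assume "f \<in> KK N" "g \<in> KK N"
  obtain a where "f - (a * genx - genx * a) \<in> II N" using K_elim[OF \<open>f \<in> KK N\<close>] by blast
  moreover obtain b where "g - (b * genx - genx * b) \<in> II N" using K_elim[OF \<open>g \<in> KK N\<close>] by blast
  ultimately have "(f - (a * genx - genx * a)) + (g - (b * genx - genx * b)) \<in> II N" by (rule tsideal.add)
  then have "(f + g) - ((a + b) * genx - genx * (a + b)) \<in> II N" by (simp add: algebra_simps)
  then show ?thesis by (rule K_intro)
qed

lemma K_transfer: "g \<in> KK N \<Longrightarrow> f - g \<in> II N \<Longrightarrow> f \<in> KK N"
  using K_add[OF _ K_I, of g N "f - g"] by simp

lemma K_scal: "f \<in> KK N \<Longrightarrow> scal c * f \<in> KK N"
proof -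
  assume "f \<in> KK N"
  then obtain a where "f - (a * genx - genx * a) \<in> II N" using K_elim by blast
  then have "scal c * (f - (a * genx - genx * a)) \<in> II N" by (rule I_lmult)
  moreover have "scal c * (f - (a * genx - genx * a))
     = scal c * f - ((scal c * a) * genx - genx * (scal c * a))"
    by (simp only: right_diff_distrib mult.assoc[symmetric] scal_commute[of c genx])
  ultimately show ?thesis by (intro K_intro) (simp only:)
qed

lemma K_uminus: "f \<in> KK N \<Longrightarrow> - f \<in> KK N"
  using K_scal[of f N "-1"] by (simp add: scal_def single_uminus)

lemma K_diff: "f \<in> KK N \<Longrightarrow> g \<in> KK N \<Longrightarrow> f - g \<in> KK N"
  using K_add[of f N "-g"] K_uminus[of g N] by simp

lemma K_lX: "f \<in> KK N \<Longrightarrow> genx * f \<in> KK N"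
proof -
  assume "f \<in> KK N"
  then obtain a where "f - (a * genx - genx * a) \<in> II N" using K_elim by blast
  then have "genx * (f - (a * genx - genx * a)) \<in> II N" by (rule I_lmult)
  moreover have "genx * (f - (a * genx - genx * a))
     = genx * f - ((genx * a) * genx - genx * (genx * a))"
    by (simp only: right_diff_distrib mult.assoc)
  ultimately show ?thesis by (intro K_intro) (simp only:)
qed

lemma K_lXpow: "f \<in> KK N \<Longrightarrow> genx^i * f \<in> KK N"
proof (induction i)
  case 0 then show ?case by simp
next
  case (Suc i)
  have "genx * (genx^i * f) \<in> KK N" by (rule K_lX[OF Suc.IH[OF Suc.prems]])
  then show ?case by (simp add: mult.assoc)
qed

inductive_set MM :: "nat \<Rightarrow> nat \<Rightarrow> 'k::field freealg set" for N j where
  I: "p \<in> II N \<Longrightarrow> p \<in> MM N j"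
| mon: "t < j \<Longrightarrow> scal c * genx^(N+i) * geny^t \<in> MM N j"
| add: "p \<in> MM N j \<Longrightarrow> q \<in> MM N j \<Longrightarrow> p + q \<in> MM N j"

lemma M_transfer: "g \<in> MM N j \<Longrightarrow> f - g \<in> II N \<Longrightarrow> f \<in> MM N j"
  using MM.add[OF _ MM.I, of g N j "f - g"] by simp

lemma M_of_nat: "p \<in> MM N j \<Longrightarrow> of_nat n * p \<in> MM N j"
proof (induction n)
  case 0 then show ?case using MM.I[OF tsideal.zero] by simp
next
  case (Suc n)
  have "p + of_nat n * p \<in> MM N j" by (rule MM.add[OF Suc.prems Suc.IH[OF Suc.prems]])
  then show ?case by (simp add: algebra_simps)
qed

lemma M_lY:
  assumes N: "N \<ge> 1"
  shows "p \<in> MM N j \<Longrightarrow> geny * p \<in> MM N (Suc j)"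
proof (induction rule: MM.induct)
  case (I p) then show ?case by (rule MM.I[OF I_lmult])
next
  case (mon t c i)
  have ee: "N+i+N-1 = N+(i+N-1)" using N by arith
  have e: "genx^(N+i+N-1) = genx^(N+(i+N-1))" by (simp only: ee)
  have "scal c * genx^(N+i) * geny^(Suc t) + scal (c * of_nat (N+i)) * genx^(N+(i+N-1)) * geny^t
        \<in> MM N (Suc j)"
  proof (rule MM.add)
    show "scal c * genx^(N+i) * geny^(Suc t) \<in> MM N (Suc j)" using mon by (intro MM.mon) simp
    show "scal (c * of_nat (N+i)) * genx^(N+(i+N-1)) * geny^t \<in> MM N (Suc j)"
      using mon by (intro MM.mon) simp
  qed
  then show ?case using Ymon[OF N, of c "N+i" t] unfolding e by (rule M_transfer)
next
  case (add p q)
  have "geny * p + geny * q \<in> MM N (Suc j)" by (rule MM.add[OF add.IH])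
  then show ?case by (simp add: distrib_left)
qed

lemma M_K:
  fixes p :: "'k::field freealg"
  assumes IH: "\<forall>t<j. (genx::'k freealg)^N * geny^t \<in> KK N"
  shows "p \<in> MM N j \<Longrightarrow> p \<in> KK N"
proof (induction rule: MM.induct)
  case (I p) then show ?case by (rule K_I)
next
  case (mon t c i)
  have e: "scal c * genx^(N+i) * geny^t = scal c * (genx^i * (genx^N * geny^t))"
  proof -
    have c: "(genx::'k freealg)^(N+i) = genx^i * genx^N" by (subst add.commute) (rule power_add)
    show ?thesis by (simp only: c mult.assoc)
  qed
  have "(genx::'k freealg)^N * geny^t \<in> KK N" by (rule IH[rule_format, OF mon])
  then show ?case unfolding e by (rule K_scal[OF K_lXpow])
next
  case (add p q) show ?case by (rule K_add[OF add.IH])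
qed

lemma ring_ident3:
  fixes Y X W A B :: "'a::ring_1"
  assumes "Y * B = A"
  shows "(Y * A) * X - X * (Y * A) - (1 + of_nat k) * W * A
    = Y * (A * X - X * A - of_nat k * W * B) + of_nat k * ((Y * W - W * Y) * B) + (Y * X - X * Y - W) * A"
proof -
  have "Y * (A * X - X * A - of_nat k * W * B) + of_nat k * ((Y * W - W * Y) * B) + (Y * X - X * Y - W) * A
      = Y * A * X - X * Y * A - W * A - (Y * of_nat k) * W * B + of_nat k * Y * W * B - of_nat k * W * (Y * B)"
    by (simp add: algebra_simps)
  also have "\<dots> = Y * A * X - X * Y * A - W * A - of_nat k * W * A"
    by (simp only: mult_of_nat_commute[symmetric] assms) simp
  also have "\<dots> = (Y * A) * X - X * (Y * A) - (1 + of_nat k) * W * A"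
    by (simp add: algebra_simps)
  finally show ?thesis by (rule sym)
qed

lemma D_Y:
  assumes N: "N \<ge> 1"
  shows "geny^(Suc j) * genx - genx * geny^(Suc j) - of_nat (Suc j) * genx^N * geny^j \<in> MM N j"
proof (induction j)
  case 0
  have "geny^(Suc 0) * genx - genx * geny^(Suc 0) - of_nat (Suc 0) * genx^N * geny^0 = (relA N :: 'a freealg)"
    by (simp add: relA_def)
  then show ?case using MM.I[OF I_r] by simp
next
  case (Suc j)
  let ?X = "genx :: 'a freealg" and ?Y = "geny :: 'a freealg"
  let ?W = "?X^N" and ?A = "?Y^Suc j" and ?B = "?Y^j"
  have id: "?Y^(Suc (Suc j)) * ?X - ?X * ?Y^(Suc (Suc j)) - of_nat (Suc (Suc j)) * ?W * ?Y^(Suc j)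
    = ?Y * (?A * ?X - ?X * ?A - of_nat (Suc j) * ?W * ?B) + of_nat (Suc j) * ((?Y * ?W - ?W * ?Y) * ?B)
      + (?Y * ?X - ?X * ?Y - ?W) * ?A"
    unfolding power_Suc[of ?Y "Suc j"] of_nat_Suc[of "Suc j"]
    by (rule ring_ident3) (simp only: power_Suc)
  have t1: "?Y * (?A * ?X - ?X * ?A - of_nat (Suc j) * ?W * ?B) \<in> MM N (Suc j)"
    by (rule M_lY[OF N Suc.IH])
  let ?E = "?Y * ?W - ?W * ?Y - of_nat N * ?X^(N+N-1)"
  have E: "?E \<in> II N" using YX_pow[OF N, of N] by simp
  have pw: "N + N - 1 = N + (N - 1)" using N by simp
  have "(?Y * ?W - ?W * ?Y) * ?B - scal (of_nat N) * ?X^(N+(N-1)) * ?B = ?E * ?B"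
    unfolding scal_of_nat pw by (simp add: algebra_simps)
  moreover have m: "scal (of_nat N) * ?X^(N+(N-1)) * ?B \<in> MM N (Suc j)"
    by (rule MM.mon) simp
  ultimately have "(?Y * ?W - ?W * ?Y) * ?B \<in> MM N (Suc j)"
    using M_transfer[OF m] I_rmult[OF E, of ?B] by simp
  then have t2: "of_nat (Suc j) * ((?Y * ?W - ?W * ?Y) * ?B) \<in> MM N (Suc j)"
    by (rule M_of_nat)
  have t3: "(?Y * ?X - ?X * ?Y - ?W) * ?A \<in> MM N (Suc j)"
    using MM.I[OF I_rmult[OF I_r[of "relA N"]]] unfolding relA_def .
  show ?case unfolding id by (intro MM.add t1 t2 t3)
qed

lemma XNY:
  fixes N :: nat
  assumes N: "N \<ge> 1"
  shows "(genx::'k::field_char_0 freealg)^N * geny^j \<in> KK N"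
proof (induction j rule: less_induct)
  case (less j)
  let ?X = "genx :: 'k freealg" and ?Y = "geny :: 'k freealg"
  let ?D = "?Y^(Suc j) * ?X - ?X * ?Y^(Suc j)"
  let ?T = "of_nat (Suc j) * ?X^N * ?Y^j"
  have D: "?D \<in> KK N" by (rule K_gen)
  have IH: "\<forall>t<j. ?X^N * ?Y^t \<in> KK N" using less by blast
  have R: "?D - ?T \<in> KK N"
    by (rule M_K[OF IH D_Y[OF N, of j]])
  have T: "?T \<in> KK N" using K_diff[OF D R] by simp
  have nz: "(of_nat (Suc j) :: 'k) \<noteq> 0" by (rule of_nat_neq_0)
  have "scal (inverse (of_nat (Suc j))) * ?T = ?X^N * ?Y^j"
    unfolding scal_of_nat[symmetric] mult.assoc[symmetric] scal_mult using nz
    by (simp add: scal_one)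
  then show ?case using K_scal[OF T, of "inverse (of_nat (Suc j))"] by simp
qed

inductive_set PB :: "'k::field freealg set" where
  zero: "0 \<in> PB"
| mon: "scal c * genx^i * geny^j \<in> PB"
| add: "p \<in> PB \<Longrightarrow> q \<in> PB \<Longrightarrow> p + q \<in> PB"

abbreviation QQ :: "nat \<Rightarrow> 'k::field freealg set" where
  "QQ N \<equiv> {f. \<exists>g\<in>PB. f - g \<in> II N}"

lemma Q_transfer:
  fixes f g :: "'k::field freealg"
  shows "g \<in> QQ N \<Longrightarrow> f - g \<in> II N \<Longrightarrow> f \<in> QQ N"
proof -
  assume "g \<in> QQ N" and fg: "f - g \<in> II N"
  then obtain h where h: "h \<in> PB" "g - h \<in> II N" by blast
  have "(f - g) + (g - h) \<in> II N" by (rule tsideal.add[OF fg h(2)])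
  then have "f - h \<in> II N" by simp
  with h(1) show ?thesis by blast
qed

lemma Q_add:
  fixes f g :: "'k::field freealg"
  shows "f \<in> QQ N \<Longrightarrow> g \<in> QQ N \<Longrightarrow> f + g \<in> QQ N"
proof -
  assume "f \<in> QQ N" "g \<in> QQ N"
  then obtain h1 h2 where h: "h1 \<in> PB" "f - h1 \<in> II N" "h2 \<in> PB" "g - h2 \<in> II N" by blast
  have "(f - h1) + (g - h2) \<in> II N" by (rule tsideal.add[OF h(2) h(4)])
  then have "(f + g) - (h1 + h2) \<in> II N" by (simp add: algebra_simps)
  moreover have "h1 + h2 \<in> PB" by (rule PB.add[OF h(1) h(3)])
  ultimately show ?thesis by blast
qed

lemma PB_lX:
  fixes g :: "'k::field freealg"
  shows "g \<in> PB \<Longrightarrow> genx * g \<in> PB"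
proof (induction rule: PB.induct)
  case zero then show ?case by (simp add: PB.zero)
next
  case (mon c i j)
  have "genx * (scal c * genx^i * geny^j) = scal c * genx^(Suc i) * (geny^j :: 'k freealg)"
    by (simp only: mult.assoc[symmetric] scal_commute[of c genx] power_Suc)
  then show ?case using PB.mon[of c "Suc i" j] by simp
next
  case (add p q)
  show ?case using PB.add[OF add.IH] by (simp add: distrib_left)
qed

lemma PB_lY:
  fixes g :: "'k::field freealg"
  assumes N: "N \<ge> 1"
  shows "g \<in> PB \<Longrightarrow> geny * g \<in> QQ N"
proof (induction rule: PB.induct)
  case zero
  have "(0::'k freealg) \<in> QQ N" using PB.zero tsideal.zero by force
  then show ?case by simp
next
  case (mon c i j)
  have "scal c * genx^i * geny^(Suc j) + scal (c * of_nat i) * genx^(i+N-1) * geny^j \<in> (PB :: 'k freealg set)"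
    by (intro PB.add PB.mon)
  then have "scal c * genx^i * geny^(Suc j) + scal (c * of_nat i) * genx^(i+N-1) * geny^j \<in> QQ N"
    using tsideal.zero by force
  then show ?case by (rule Q_transfer[OF _ Ymon[OF N]])
next
  case (add p q)
  show ?case using Q_add[OF add.IH] by (simp add: distrib_left)
qed

lemma Q_all:
  fixes f :: "'k::field freealg"
  assumes N: "N \<ge> 1"
  shows "f \<in> QQ N"
proof (induction f rule: left_induct)
  case (1 c)
  have "scal c * genx^0 * geny^0 \<in> (PB :: 'k freealg set)" by (rule PB.mon)
  then show ?case using tsideal.zero by force
next
  case (2 f)
  then obtain g where g: "g \<in> PB" "f - g \<in> II N" by blast
  have "genx * g \<in> PB" by (rule PB_lX[OF g(1)])
  moreover have "genx * f - genx * g \<in> II N"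
    using I_lmult[OF g(2), of genx] by (simp add: right_diff_distrib)
  ultimately show ?case by blast
next
  case (3 f)
  then obtain g where g: "g \<in> PB" "f - g \<in> II N" by blast
  have "geny * f - geny * g \<in> II N"
    using I_lmult[OF g(2), of geny] by (simp add: right_diff_distrib)
  then show ?case by (rule Q_transfer[OF PB_lY[OF N g(1)]])
next
  case (4 f g)
  show ?case by (rule Q_add[OF 4])
qed

lemma XN_all:
  fixes a :: "'k::field_char_0 freealg"
  assumes N: "N \<ge> 1"
  shows "genx^N * a \<in> KK N"
proof -
  obtain g where g: "g \<in> PB" "a - g \<in> II N" using Q_all[OF N, of a] by blast
  have "g \<in> PB \<Longrightarrow> (genx::'k freealg)^N * g \<in> KK N" for g
  proof (induction rule: PB.induct)
    case zero then show ?case using K_I[OF tsideal.zero] by simp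
  next
    case (mon c i j)
    have e: "(genx::'k freealg)^N * (scal c * genx^i * geny^j) = scal c * (genx^i * (genx^N * geny^j))"
    proof -
      have "(genx::'k freealg)^N * (scal c * genx^i * geny^j) = (genx^N * scal c) * genx^i * geny^j"
        by (simp only: mult.assoc)
      also have "\<dots> = scal c * (genx^N * genx^i) * geny^j"
        by (simp only: scal_commute mult.assoc)
      also have "\<dots> = scal c * (genx^i * (genx^N * geny^j))"
      proof -
        have c: "(genx::'k freealg)^N * genx^i = genx^i * genx^N"
          by (simp only: power_add[symmetric] add.commute)
        show ?thesis by (simp only: c mult.assoc)
      qed
      finally show ?thesis .
    qed
    show ?case unfolding e by (rule K_scal[OF K_lXpow[OF XNY[OF N]]])
  next
    case (add p q)
    show ?case using K_add[OF add.IH] by (simp add: distrib_left)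
  qed
  note h1 = this[OF g(1)]
  have h2: "(genx::'k freealg)^N * a - genx^N * g \<in> II N"
    using I_lmult[OF g(2), of "genx^N"] by (simp add: right_diff_distrib)
  show ?thesis by (rule K_transfer[OF h1 h2])
qed

lemma inA_trans:
  assumes "S \<subseteq> inA N T"
  shows "inA N S \<subseteq> inA N T"
proof
  fix f assume "f \<in> inA N S"
  then obtain s where s: "s \<in> S" "f - s \<in> II N" unfolding inA_def by blast
  then obtain t where t: "t \<in> T" "s - t \<in> II N" using assms unfolding inA_def by blast
  have "(f - s) + (s - t) \<in> II N" by (rule tsideal.add[OF s(2) t(2)])
  then have "f - t \<in> II N" by simp
  with t(1) show "f \<in> inA N T" unfolding inA_def by blast
qed

lemma inA_self: "S \<subseteq> inA N S"
  unfolding inA_def using tsideal.zero by force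

theorem lemma3p2:
  fixes N :: nat
  assumes "N \<ge> 1"
  shows "inA N {a * (genx::'k::field_char_0 freealg) - genx * a | a. True} = inA N comm_span
       \<and> inA N (comm_span :: 'k freealg set) = inA N {genx ^ N * a | a. True}"
proof -
  have 1: "inA N {a * (genx::'k freealg) - genx * a | a. True} \<subseteq> inA N comm_span"
  proof (rule inA_trans, rule subsetI)
    fix f assume "f \<in> {a * (genx::'k freealg) - genx * a | a. True}"
    then obtain a where a: "f = a * genx - genx * a" by blast
    have "scal 1 * (a * genx - genx * a) \<in> comm_span" by (rule comm_span.gen)
    then have "f \<in> comm_span" unfolding a scal_one by simp
    then show "f \<in> inA N comm_span" using inA_self by blast
  qed
  have 2: "inA N (comm_span :: 'k freealg set) \<subseteq> inA N {genx ^ N * a | a. True}"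
    by (rule inA_trans) (use comm_span_J[OF assms] in blast)
  have 3: "inA N {genx ^ N * a | a. True} \<subseteq> inA N {a * (genx::'k freealg) - genx * a | a. True}"
    by (rule inA_trans) (use XN_all[OF assms] in blast)
  show ?thesis using 1 2 3 by blast
qed

end
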